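(* For $j\in\omega$ let $X_j=\{v_{j,s}: s\in 2^j\}$ (distinct new points indexed by binary strings of length $j$, the sets $X_j$ pairwise disjoint), and for $n\in\omega$ let $H_n$ be the tournament with domain $\bigcup_{j<n}X_j$ (so $|H_n|=2^n-1$) with orientation: for $j>i$, $v_{j,s}\to v_{i,t}$ iff $s(i)=1$ (and otherwise $v_{i,t}\to v_{j,s}$); within a level, $v_{j,s}\to v_{j,t}$ iff $s<_{\mathrm{lex}}t$. Then for every $n\ge1$, $\mathsf{rk}(H_n)=n$.
   Context: A tournament is a structure $(T,\to)$ such that for any two distinct $u,v$ exactly one of $u\to v$, $v\to u$ holds. Let $\mathcal F$ be the class of finite tournaments. Substructures are induced sub-tournaments and $\mathsf{age}(X)$ is the set of finite sub-tournaments of $X$. For $A\le B$, $B$ is a prime extension of $A$ if $|B\setminus A|=1$; a realization of $B$ in $X$ (where $A\le X$) is $C\le X$ with $A\le C$ and an isomorphism $B\to C$ fixing $A$ pointwise. For $F\in\mathsf{age}(X)$ define by recursion: $\mathsf{rk}_X(F)\ge0$ always; $\mathsf{rk}_X(F)\ge\alpha+1$ iff every prime extension $B\in\mathcal F$ of $F$ has a realization $C$ in $X$ with $\mathsf{rk}_X(C)\ge\alpha$; for limit $\alpha$, $\mathsf{rk}_X(F)\ge\alpha$ iff $\mathsf{rk}_X(F)\ge\beta$ for all $\beta<\alpha$. $\mathsf{rk}_X(F)=\sup\{\alpha:\mathsf{rk}_X(F)\ge\alpha\}$ (or $\infty$), and $\mathsf{rk}(X)=\mathsf{rk}_X(\emptyset)$.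 $<_{\mathrm{lex}}$ is the lexicographic order on binary strings of equal length. *)

theory Defs
  imports Main
begin

text \<open>A (relational) structure is a carrier set V with a binary relation E;
  only the values of E on V matter. Substructures are induced, so a
  substructure of (V,E) is identified with a subset of V.\<close>

definition tournament :: "'a set \<Rightarrow> ('a \<Rightarrow> 'a \<Rightarrow> bool) \<Rightarrow> bool" where
  "tournament V E \<longleftrightarrow>
     (\<forall>u\<in>V. \<not> E u u) \<and> (\<forall>u\<in>V. \<forall>v\<in>V. u \<noteq> v \<longrightarrow> (E u v \<longleftrightarrow> \<not> E v u))"

definition age :: "'a set \<Rightarrow> 'a set set" where
  "age V = {F. F \<subseteq> V \<and> finite F}"

text \<open>A prime extension (W,R) of the finite tournament F (with relation E):
  a finite tournament whose carrier lives in 'a option, containing a copy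
  Some ` F of F as induced substructure, with exactly one additional point.
  Every prime extension in the class of finite tournaments is isomorphic over F
  to one of this form.\<close>
definition prime_ext :: "'a set \<Rightarrow> ('a \<Rightarrow> 'a \<Rightarrow> bool) \<Rightarrow> 'a option set \<Rightarrow>
    ('a option \<Rightarrow> 'a option \<Rightarrow> bool) \<Rightarrow> bool" where
  "prime_ext F E W R \<longleftrightarrow> finite W \<and> tournament W R \<and> Some ` F \<subseteq> W \<and>
     (\<forall>a\<in>F. \<forall>b\<in>F. R (Some a) (Some b) \<longleftrightarrow> E a b) \<and>
     card (W - Some ` F) = 1"

definition realization :: "'a set \<Rightarrow> ('a \<Rightarrow> 'a \<Rightarrow> bool) \<Rightarrow> 'a set \<Rightarrow> 'a option set \<Rightarrow>
    ('a option \<Rightarrow> 'a option \<Rightarrow> bool) \<Rightarrow> 'a set \<Rightarrow> bool" where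
  "realization V E F W R C \<longleftrightarrow> C \<subseteq> V \<and> F \<subseteq> C \<and>
     (\<exists>f. bij_betw f W C \<and> (\<forall>a\<in>F. f (Some a) = a) \<and>
          (\<forall>x\<in>W. \<forall>y\<in>W. R x y \<longleftrightarrow> E (f x) (f y)))"

text \<open>rk_ge V E F k means rk_X(F) \<ge> k for finite ordinals k (X = (V,E)).\<close>
fun rk_ge :: "'a set \<Rightarrow> ('a \<Rightarrow> 'a \<Rightarrow> bool) \<Rightarrow> 'a set \<Rightarrow> nat \<Rightarrow> bool" where
  "rk_ge V E F 0 = True"
| "rk_ge V E F (Suc k) =
     (\<forall>W R. prime_ext F E W R \<longrightarrow>
        (\<exists>C. realization V E F W R C \<and> C \<in> age V \<and> rk_ge V E C k))"

text \<open>rk(X) = n for a natural number n: rk_X(\<emptyset>) \<ge> n but not \<ge> n+1.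
  (For finite n this is equivalent to the ordinal-valued definition, since
  the class of \<alpha> with rk \<ge> \<alpha> is downward closed.)\<close>
definition rank_eq :: "'a set \<Rightarrow> ('a \<Rightarrow> 'a \<Rightarrow> bool) \<Rightarrow> nat \<Rightarrow> bool" where
  "rank_eq V E n \<longleftrightarrow> rk_ge V E {} n \<and> \<not> rk_ge V E {} (Suc n)"

definition lex_less :: "bool list \<Rightarrow> bool list \<Rightarrow> bool" where
  "lex_less s t \<longleftrightarrow> length s = length t \<and>
     (\<exists>k < length s. take k s = take k t \<and> \<not> s ! k \<and> t ! k)"

text \<open>The vertex v_{j,s} is represented by the string s (with j = length s).\<close>
definition H_vert :: "nat \<Rightarrow> bool list set" where
  "H_vert n = {s. length s < n}"

definition H_edge :: "bool list \<Rightarrow> bool list \<Rightarrow> bool" where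
  "H_edge s t =
     (if length t < length s then s ! length t
      else if length s < length t then \<not> t ! length s
      else lex_less s t)"

end

theory Submission
  imports Defs
begin

lemma lex_irrefl: "\<not> lex_less s s"
  unfolding lex_less_def by auto

lemma lex_total:
  assumes "length s = length t" "s \<noteq> t"
  shows "lex_less s t \<or> lex_less t s"
proof -
  have ex: "\<exists>k. k < length s \<and> s ! k \<noteq> t ! k"
    using assms nth_equalityI by blast
  define k where "k = (LEAST k. k < length s \<and> s ! k \<noteq> t ! k)"
  have k: "k < length s" "s ! k \<noteq> t ! k"
    using LeastI_ex[OF ex] unfolding k_def by auto
  have lt: "\<And>i. i < k \<Longrightarrow> s ! i = t ! i"
    using not_less_Least k(1) unfolding k_def by fastforce
  have tk: "take k s = take k t"
    by (rule nth_equalityI) (use assms k lt in auto)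
  show ?thesis
    using k tk assms(1) unfolding lex_less_def by (cases "s ! k") auto
qed

lemma lex_asym:
  assumes "lex_less s t" shows "\<not> lex_less t s"
proof
  assume b: "lex_less t s"
  obtain k1 where k1: "k1 < length s" "take k1 s = take k1 t" "\<not> s ! k1" "t ! k1"
    using assms unfolding lex_less_def by auto
  obtain k2 where k2: "k2 < length t" "take k2 t = take k2 s" "\<not> t ! k2" "s ! k2"
    using b unfolding lex_less_def by auto
  have "length s = length t" using assms unfolding lex_less_def by auto
  show False
  proof (cases k1 k2 rule: linorder_cases)
    case less
    have "take k2 s ! k1 = take k2 t ! k1" using k2(2) by (simp only:)
    then have "s ! k1 = t ! k1" using less by (simp only: nth_take)
    then show False using k1(3,4) by blast
  next
    case equal then show False using k1(3,4) k2(3,4) by blast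
  next
    case greater
    have "take k1 s ! k2 = take k1 t ! k2" using k1(2) by (simp only:)
    then have "s ! k2 = t ! k2" using greater by (simp only: nth_take)
    then show False using k2(3,4) by blast
  qed
qed

lemma H_tournament: "tournament V H_edge"
  unfolding tournament_def
proof (intro conjI ballI impI)
  fix u show "\<not> H_edge u u" by (simp add: H_edge_def lex_irrefl)
next
  fix u v :: "bool list" assume "u \<noteq> v"
  then show "H_edge u v = (\<not> H_edge v u)"
    unfolding H_edge_def using lex_total lex_asym by auto
qed

lemma card_H_vert: "finite (H_vert n) \<and> card (H_vert n) < 2 ^ n"
proof (induction n)
  case 0 then show ?case by (simp add: H_vert_def)
next
  case (Suc n)
  have eq: "H_vert (Suc n) = H_vert n \<union> {xs. set xs \<subseteq> UNIV \<and> length xs = n}"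
    unfolding H_vert_def by auto
  have f: "finite {xs::bool list. set xs \<subseteq> UNIV \<and> length xs = n}"
    by (rule finite_lists_length_eq) simp
  have c: "card {xs::bool list. set xs \<subseteq> UNIV \<and> length xs = n} = 2 ^ n"
    using card_lists_length_eq[of "UNIV::bool set" n] by simp
  have "card (H_vert (Suc n)) \<le> card (H_vert n) + 2 ^ n"
    unfolding eq using card_Un_le[of "H_vert n" "{xs::bool list. set xs \<subseteq> UNIV \<and> length xs = n}"] c by linarith
  then show ?case using Suc f eq by simp
qed


definition extR :: "('a \<Rightarrow> 'a \<Rightarrow> bool) \<Rightarrow> 'a set \<Rightarrow> 'a option \<Rightarrow> 'a option \<Rightarrow> bool" where
  "extR E P x y = (case x of
      Some a \<Rightarrow> (case y of Some b \<Rightarrow> E a b | None \<Rightarrow> a \<notin> P)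
    | None \<Rightarrow> (case y of Some b \<Rightarrow> b \<in> P | None \<Rightarrow> False))"

lemma extR_prime:
  assumes "finite F" "tournament F E"
  shows "prime_ext F E (insert None (Some ` F)) (extR E P)"
proof -
  have "insert None (Some ` F) - Some ` F = {None}" by auto
  moreover have "tournament (insert None (Some ` F)) (extR E P)"
    unfolding tournament_def
  proof (intro conjI ballI impI)
    fix u assume u: "u \<in> insert None (Some ` F)"
    show "\<not> extR E P u u"
    proof (cases u)
      case None then show ?thesis by (simp add: extR_def)
    next
      case (Some a) then have "a \<in> F" using u by auto
      then have "\<not> E a a" using assms(2) unfolding tournament_def by blast
      then show ?thesis using Some by (simp add: extR_def)
    qed
  next
    fix u v assume u: "u \<in> insert None (Some ` F)" and v: "v \<in> insert None (Some ` F)"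
      and uv: "u \<noteq> v"
    show "extR E P u v = (\<not> extR E P v u)"
    proof (cases u)
      case None
      then obtain b where "v = Some b" using uv by (cases v) auto
      then show ?thesis using None by (simp add: extR_def)
    next
      case (Some a)
      show ?thesis
      proof (cases v)
        case None then show ?thesis using Some by (simp add: extR_def)
      next
        case (Some b)
        have "a \<in> F" "b \<in> F" "a \<noteq> b" using u v uv \<open>u = Some a\<close> Some by auto
        then have "E a b = (\<not> E b a)" using assms(2) unfolding tournament_def by blast
        then show ?thesis using Some \<open>u = Some a\<close> by (simp add: extR_def)
      qed
    qed
  qed
  moreover have "\<forall>a\<in>F. \<forall>b\<in>F. extR E P (Some a) (Some b) = E a b" by (simp add: extR_def)
  ultimately show ?thesis
    unfolding prime_ext_def using assms(1) by (simp add: subset_insertI)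
qed

lemma rk_ge_SucD: "rk_ge V E F (Suc k) \<Longrightarrow> prime_ext F E W R \<Longrightarrow>
  \<exists>C. realization V E F W R C \<and> C \<in> age V \<and> rk_ge V E C k"
  by simp

lemma count_lemma:
  assumes fV: "finite V" and FV: "F \<subseteq> V" and tV: "tournament V E"
    and rk: "rk_ge V E F (Suc 0)"
  shows "2 ^ card F + card F \<le> card V"
proof -
  have fF: "finite F" using fV FV finite_subset by blast
  have tF: "tournament F E" using tV FV unfolding tournament_def by blast
  let ?g = "\<lambda>v. {a\<in>F. E v a}"
  have "Pow F \<subseteq> ?g ` (V - F)"
  proof
    fix P assume P: "P \<in> Pow F"
    obtain C where C: "realization V E F (insert None (Some ` F)) (extR E P) C"
      using rk_ge_SucD[OF rk extR_prime[OF fF tF, of P]] by blast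
    then obtain f where f: "bij_betw f (insert None (Some ` F)) C" "\<forall>a\<in>F. f (Some a) = a"
      "\<forall>x\<in>insert None (Some ` F). \<forall>y\<in>insert None (Some ` F). extR E P x y \<longleftrightarrow> E (f x) (f y)"
      and CV: "C \<subseteq> V"
      unfolding realization_def by blast
    have vC: "f None \<in> C" using f(1) bij_betwE by blast
    have vF: "f None \<notin> F"
    proof
      assume "f None \<in> F"
      then have "f None = f (Some (f None))" using f(2) by simp
      moreover have "inj_on f (insert None (Some ` F))" using f(1) by (simp add: bij_betw_def)
      ultimately have "None = Some (f None)"
        using \<open>f None \<in> F\<close> by (meson image_eqI insertI1 insertI2 inj_onD)
      then show False by simp
    qed
    have "?g (f None) = P"
    proof -
      have "\<forall>a\<in>F. (a \<in> P) = E (f None) a"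
      proof
        fix a assume a: "a \<in> F"
        have "extR E P None (Some a) = E (f None) (f (Some a))"
          using f(3) a by blast
        then show "(a \<in> P) = E (f None) a" using f(2) a by (simp add: extR_def)
      qed
      then show ?thesis using P by auto
    qed
    then show "P \<in> ?g ` (V - F)" using vC vF CV by blast
  qed
  then have "card (Pow F) \<le> card (?g ` (V - F))"
    by (intro card_mono) (use fV in auto)
  also have "\<dots> \<le> card (V - F)" by (rule card_image_le) (use fV in auto)
  also have "\<dots> = card V - card F" using FV fF by (simp add: card_Diff_subset)
  finally have "card (Pow F) \<le> card V - card F" .
  moreover have "card (Pow F) = 2 ^ card F" using fF by (simp add: card_Pow)
  moreover have "card F \<le> card V" using card_mono[OF fV FV] .
  ultimately show ?thesis by linarith
qed

lemma chain_lemma: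
  assumes fV: "finite V" and tV: "tournament V E"
  shows "F \<subseteq> V \<Longrightarrow> rk_ge V E F (Suc m) \<Longrightarrow> 2 ^ (card F + m) + card F + m \<le> card V"
proof (induction m arbitrary: F)
  case 0 then show ?case using count_lemma[OF fV _ tV] by simp
next
  case (Suc m)
  have fF: "finite F" using fV Suc.prems(1) finite_subset by blast
  have tF: "tournament F E" using tV Suc.prems(1) unfolding tournament_def by blast
  obtain C where C: "realization V E F (insert None (Some ` F)) (extR E {}) C"
      "C \<in> age V" "rk_ge V E C (Suc m)"
    using rk_ge_SucD[OF Suc.prems(2) extR_prime[OF fF tF, of "{}"]] by blast
  obtain f where "bij_betw f (insert None (Some ` F)) C"
    using C(1) unfolding realization_def by blast
  then have "card C = card (insert None (Some ` F))" by (simp add: bij_betw_same_card)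
  also have "\<dots> = Suc (card F)" using fF by (auto simp: card_image)
  finally have cC: "card C = Suc (card F)" .
  have "C \<subseteq> V" using C(2) unfolding age_def by auto
  from Suc.IH[OF this C(3)] cC show ?case by simp
qed


lemma lower_lemma:
  "F \<subseteq> H_vert n \<Longrightarrow> finite F \<Longrightarrow> inj_on length F \<Longrightarrow> length ` F = {..<card F} \<Longrightarrow>
   card F + m \<le> n \<Longrightarrow> rk_ge (H_vert n) H_edge F m"
proof (induction m arbitrary: F)
  case 0 then show ?case by simp
next
  case (Suc m)
  note FH = Suc.prems(1) and fF = Suc.prems(2) and inj = Suc.prems(3)
    and img = Suc.prems(4) and cn = Suc.prems(5)
  define k where "k = card F"
  show ?case
    unfolding rk_ge.simps(2)
  proof (intro allI impI)
    fix W R assume pe: "prime_ext F H_edge W R"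
    have tW: "tournament W R" and sub: "Some ` F \<subseteq> W"
      and RE: "\<forall>a\<in>F. \<forall>b\<in>F. R (Some a) (Some b) = H_edge a b"
      and c1: "card (W - Some ` F) = 1"
      using pe unfolding prime_ext_def by auto
    obtain w where w: "W - Some ` F = {w}" using c1 card_1_singletonE by blast
    have wW: "w \<in> W" and wF: "w \<notin> Some ` F" using w by auto
    have Weq: "W = insert w (Some ` F)" using w sub by blast
    define g where "g = inv_into F length"
    define v where "v = map (\<lambda>i. R w (Some (g i))) [0..<k]"
    have lv: "length v = k" unfolding v_def by simp
    have la: "\<And>a. a \<in> F \<Longrightarrow> length a < k" using img unfolding k_def by auto
    have ga: "\<And>a. a \<in> F \<Longrightarrow> g (length a) = a" unfolding g_def using inj by (simp add: inv_into_f_f)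
    have va: "\<And>a. a \<in> F \<Longrightarrow> v ! length a = R w (Some a)"
      using la ga unfolding v_def by simp
    have vF: "v \<notin> F" using la lv by auto
    have vH: "v \<in> H_vert n" using lv cn unfolding H_vert_def k_def by simp
    define f where "f = (\<lambda>x. if x = w then v else the x)"
    have fS: "\<And>a. a \<in> F \<Longrightarrow> f (Some a) = a" using wF unfolding f_def by auto
    have fw: "f w = v" unfolding f_def by simp
    have bij: "bij_betw f W (insert v F)"
      unfolding bij_betw_def
    proof
      show "inj_on f W"
      proof (rule inj_onI)
        fix x y assume x: "x \<in> W" and y: "y \<in> W" and fxy: "f x = f y"
        show "x = y"
        proof (cases "x = w")
          case True
          show ?thesis
          proof (rule ccontr)
            assume "x \<noteq> y"
            then obtain b where "y = Some b" "b \<in> F" using y Weq True by auto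
            then show False using fxy True fw fS vF by auto
          qed
        next
          case False
          then obtain a where a: "x = Some a" "a \<in> F" using x Weq by auto
          show ?thesis
          proof (cases "y = w")
            case True then show ?thesis using fxy a fw fS vF by auto
          next
            case False
            then obtain b where "y = Some b" "b \<in> F" using y Weq by auto
            then show ?thesis using fxy a fS by auto
          qed
        qed
      qed
    next
      show "f ` W = insert v F"
        unfolding Weq using fS fw by (auto simp: image_image)
    qed
    have rel: "\<forall>x\<in>W. \<forall>y\<in>W. R x y = H_edge (f x) (f y)"
    proof (intro ballI)
      fix x y assume x: "x \<in> W" and y: "y \<in> W"
      show "R x y = H_edge (f x) (f y)"
      proof (cases "x = w")
        case xw: True
        show ?thesis
        proof (cases "y = w")
          case True
          have "\<not> R w w" using tW wW unfolding tournament_def by blast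
          then show ?thesis using xw True fw by (simp add: H_edge_def lex_irrefl)
        next
          case False
          then obtain b where b: "y = Some b" "b \<in> F" using y Weq by auto
          have "H_edge v b = v ! length b" using la[OF b(2)] lv by (simp add: H_edge_def)
          then show ?thesis using xw b fw fS va by simp
        qed
      next
        case xw: False
        then obtain a where a: "x = Some a" "a \<in> F" using x Weq by auto
        show ?thesis
        proof (cases "y = w")
          case True
          have "R (Some a) w = (\<not> R w (Some a))"
            using tW wW x a wF unfolding tournament_def by auto
          moreover have "H_edge a v = (\<not> v ! length a)" using la[OF a(2)] lv by (simp add: H_edge_def)
          ultimately show ?thesis using True a fw fS va by simp
        next
          case False
          then obtain b where b: "y = Some b" "b \<in> F" using y Weq by auto
          then show ?thesis using a RE fS by simp
        qed
      qed
    qed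
    have real: "realization (H_vert n) H_edge F W R (insert v F)"
      unfolding realization_def using FH vH bij fS rel by blast
    have age: "insert v F \<in> age (H_vert n)"
      unfolding age_def using FH vH fF by auto
    have cC: "card (insert v F) = Suc k" using fF vF unfolding k_def by simp
    have "rk_ge (H_vert n) H_edge (insert v F) m"
    proof (rule Suc.IH)
      show "insert v F \<subseteq> H_vert n" using FH vH by auto
      show "finite (insert v F)" using fF by auto
      show "inj_on length (insert v F)" using inj lv img vF unfolding k_def by auto
      show "length ` insert v F = {..<card (insert v F)}"
        using img lv cC unfolding k_def by (auto simp: lessThan_Suc)
      show "card (insert v F) + m \<le> n" using cC cn unfolding k_def by simp
    qed
    then show "\<exists>C. realization (H_vert n) H_edge F W R C \<and> C \<in> age (H_vert n) \<and>
        rk_ge (H_vert n) H_edge C m" using real age by blast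
  qed
qed

theorem theorem5p3:
  fixes n :: nat
  assumes "n \<ge> 1"
  shows "rank_eq (H_vert n) H_edge n"
  unfolding rank_eq_def
proof
  show "rk_ge (H_vert n) H_edge {} n"
    by (rule lower_lemma) auto
  show "\<not> rk_ge (H_vert n) H_edge {} (Suc n)"
  proof
    assume "rk_ge (H_vert n) H_edge {} (Suc n)"
    from chain_lemma[OF _ H_tournament _ this] card_H_vert[of n]
    show False by simp
  qed
qed

end
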